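(* For $\mathcal{M}=\{k\}\subseteq\mathbb{N}_0$, $k\in\mathbb{N}_0$, the sequence $\mathcal{M}^i$ reaches its limit $\mathcal{M}^\infty=\mathcal{M}_k$ after finitely many steps; specifically $\varphi(\{0\})=\varphi(\{1\})=1$ and $\varphi(\{k\})=5$ for every $k\ge2$.
   Context: A one-heap game is a set $\mathcal{M}\subseteq\mathbb{N}_0$ of moves; from position $x$ one may move to $y\in\mathbb{N}_0$ iff $x-y\in\mathcal{M}$. Misère play: a player who cannot move wins. If $0\in\mathcal{M}$, $P(\mathcal{M})=\varnothing$. Otherwise: a position is an N-position if it has no option or some option is a P-position; otherwise it is a P-position; $P(\mathcal{M})$ is the set of P-positions. $\mathcal{M}^\star=P(\mathcal{M})$, $\mathcal{M}^0=\mathcal{M}$, $\mathcal{M}^i=(\mathcal{M}^{i-1})^\star$; $\mathcal{M}^\infty$ is the pointwise limit (set of $x$ lying in $\mathcal{M}^i$ for all sufficiently large $i$). $\varphi(\mathcal{M})=\min\{i\in\mathbb{N}_0:\ \mathcal{M}^i=\mathcal{M}^\infty\}$. $\mathcal{M}_0=\varnothing$ and for $k\ge1$, $\mathcal{M}_k=\{i(3k-1)+j:\ i\in\mathbb{N}_0,\ k\le j\le2k-1\}$. *)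

theory Defs
  imports Main
begin

text \<open>P-positions of the one-heap misere game with move set M (positions are naturals).\<close>

function isP :: "nat set \<Rightarrow> nat \<Rightarrow> bool" where
  "isP M x = (0 \<notin> M \<and> (\<exists>m\<in>M. m \<le> x) \<and>
      (\<forall>m. m \<in> M \<and> 0 < m \<and> m \<le> x \<longrightarrow> \<not> isP M (x - m)))"
  by pat_completeness auto
termination
  by (relation "measure snd") auto

declare isP.simps [simp del]

definition Ppos :: "nat set \<Rightarrow> nat set" where
  "Ppos M = {x. isP M x}"

definition Miter :: "nat set \<Rightarrow> nat \<Rightarrow> nat set" where
  "Miter M i = (Ppos ^^ i) M"

definition Minf :: "nat set \<Rightarrow> nat set" where
  "Minf M = {x. \<exists>i0. \<forall>i\<ge>i0. x \<in> Miter M i}"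

definition phi :: "nat set \<Rightarrow> nat" where
  "phi M = (LEAST i. Miter M i = Minf M)"

definition Mk :: "nat \<Rightarrow> nat set" where
  "Mk k = (if k = 0 then {} else {i * (3 * k - 1) + j | i j. k \<le> j \<and> j \<le> 2 * k - 1})"

end

theory Submission imports Defs begin

lemma Ppos_char:
  assumes H: "\<And>x. x \<in> S \<longleftrightarrow> (0\<notin>M \<and> (\<exists>m\<in>M. m \<le> x) \<and> (\<forall>m. m\<in>M \<and> 0<m \<and> m\<le>x \<longrightarrow> x - m \<notin> S))"
  shows "Ppos M = S"
proof -
  have "\<forall>x. isP M x \<longleftrightarrow> x \<in> S"
  proof
    fix x show "isP M x \<longleftrightarrow> x \<in> S"
    proof (induction x rule: less_induct)
      case (less x)
      have e: "\<And>m. m\<in>M \<and> 0<m \<and> m\<le>x \<Longrightarrow> isP M (x - m) \<longleftrightarrow> x - m \<in> S"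
        using less by auto
      show ?case
        apply (subst isP.simps)
        apply (subst H)
        using e by blast
    qed
  qed
  then show ?thesis unfolding Ppos_def by auto
qed

lemma MA: "a < (n::nat) \<Longrightarrow> b < n \<Longrightarrow> (a+b) mod n = (if a+b<n then a+b else a+b-n)"
  by (simp add: le_mod_geq)

lemma SPLIT: "m \<le> (x::nat) \<Longrightarrow> 0 < n \<Longrightarrow> x mod n = (if (x-m) mod n + m mod n < n then (x-m) mod n + m mod n else (x-m) mod n + m mod n - n)"
proof -
  assume a: "m \<le> x" "0 < n"
  have "x mod n = ((x-m) mod n + m mod n) mod n" using a by (metis le_add_diff_inverse2 mod_add_eq)
  also have "\<dots> = (if (x-m) mod n + m mod n < n then (x-m) mod n + m mod n else (x-m) mod n + m mod n - n)" using a by (intro MA) auto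
  finally show ?thesis .
qed

lemma MJ: "j*n \<le> (x::nat) \<Longrightarrow> x < j*n + n \<Longrightarrow> x mod n = x - j*n"
proof -
  assume a: "j*n \<le> x" "x < j*n + n"
  have "x = n*j + (x - j*n)" using a by (simp add: mult.commute)
  moreover have "x - j*n < n" using a by linarith
  ultimately show ?thesis by (metis mod_mult_self3 mod_less add.commute mult.commute)
qed

lemma DEC:
  assumes "m \<le> (x::nat)" "0 < n"
  obtains rx rm rt where "x mod n = rx" "m mod n = rm" "(x-m) mod n = rt" "rx<n" "rm<n" "rt<n"
    "rx = rt+rm \<or> rx+n = rt+rm" "rx \<le> x" "rm \<le> m" "rt \<le> x-m"
    "x<n \<longrightarrow> rx=x" "m<n \<longrightarrow> rm=m" "x-m<n \<longrightarrow> rt = x-m"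
proof -
  have s: "x mod n = (if (x-m) mod n + m mod n < n then (x-m) mod n + m mod n else (x-m) mod n + m mod n - n)"
    using SPLIT[OF assms] .
  have "m mod n < n" "(x-m) mod n < n" using assms by auto
  then have "x mod n = (x-m) mod n + m mod n \<or> x mod n + n = (x-m) mod n + m mod n"
    using s by (auto split: if_splits)
  moreover have "x mod n < n" using assms by simp
  ultimately show ?thesis using that[of "x mod n" "m mod n" "(x-m) mod n"] using assms by auto
qed

lemma MJ': "j*n \<le> (x::nat) \<and> x < j*n + n \<longrightarrow> x mod n = x - j*n"
  using MJ by blast

lemma Ppos_char2:
  assumes Z: "0 \<notin> M"
  and A: "\<And>x. x\<in>S \<Longrightarrow> \<exists>m\<in>M. m\<le>x"
  and B: "\<And>x m. x\<in>S \<Longrightarrow> m\<in>M \<Longrightarrow> 0<m \<Longrightarrow> m \<le> x \<Longrightarrow> x-m \<in> S \<Longrightarrow> False"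
  and C: "\<And>x. x\<notin>S \<Longrightarrow> \<exists>m\<in>M. m\<le>x \<Longrightarrow> \<exists>m\<in>M. 0<m \<and> m\<le>x \<and> x-m\<in>S"
  shows "Ppos M = S"
proof (rule Ppos_char)
  fix x
  show "x \<in> S \<longleftrightarrow> (0\<notin>M \<and> (\<exists>m\<in>M. m \<le> x) \<and> (\<forall>m. m\<in>M \<and> 0<m \<and> m\<le>x \<longrightarrow> x - m \<notin> S))"
  proof
    assume "x \<in> S" then show "0\<notin>M \<and> (\<exists>m\<in>M. m \<le> x) \<and> (\<forall>m. m\<in>M \<and> 0<m \<and> m\<le>x \<longrightarrow> x - m \<notin> S)"
      using Z A B by blast
  next
    assume R: "0\<notin>M \<and> (\<exists>m\<in>M. m \<le> x) \<and> (\<forall>m. m\<in>M \<and> 0<m \<and> m\<le>x \<longrightarrow> x - m \<notin> S)"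
    show "x \<in> S"
    proof (rule ccontr)
      assume "x \<notin> S"
      then obtain m where "m\<in>M" "0<m" "m\<le>x" "x-m\<in>S" using C R by blast
      then show False using R by blast
    qed
  qed
qed

lemma DEC2:
  assumes "x = t + (m::nat)" "0 < n"
  obtains rx rm rt where "x mod n = rx" "m mod n = rm" "t mod n = rt" "rx<n" "rm<n" "rt<n"
    "rx = rt+rm \<or> rx+n = rt+rm" "rx \<le> x" "rm \<le> m" "rt \<le> t"
    "x<n \<longrightarrow> rx=x" "m<n \<longrightarrow> rm=m" "t<n \<longrightarrow> rt = t"
proof -
  have "m \<le> x" "x - m = t" using assms by auto
  then show ?thesis using DEC[of m x n] assms(2) that by metis
qed

lemma MJ2: "j*n \<le> (x::nat) \<and> x < j*n + n \<longrightarrow> x mod n + j*n = x"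
  using MJ[of j n x] by auto

lemma Ppos_char3:
  assumes Z: "0 \<notin> M"
  and A: "\<And>x. x\<in>S \<Longrightarrow> \<exists>m\<in>M. m\<le>x"
  and B: "\<And>x m t. x\<in>S \<Longrightarrow> m\<in>M \<Longrightarrow> 0<m \<Longrightarrow> x = t + m \<Longrightarrow> t \<in> S \<Longrightarrow> False"
  and C: "\<And>x. x\<notin>S \<Longrightarrow> \<exists>m\<in>M. m\<le>x \<Longrightarrow> \<exists>m t. m\<in>M \<and> 0<m \<and> x = t + m \<and> t\<in>S"
  shows "Ppos M = S"
proof (rule Ppos_char2[OF Z A])
  show False if "x\<in>S" "m\<in>M" "0<m" "m \<le> x" "x-m \<in> S" for x m
    using B[of x m "x-m"] that by auto
  show "\<exists>m\<in>M. 0<m \<and> m\<le>x \<and> x-m\<in>S" if a: "x\<notin>S" "\<exists>m\<in>M. m\<le>x" for x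
  proof -
    obtain m t where "m\<in>M" "0<m" "x = t + m" "t\<in>S" using C[OF a] by blast
    then show ?thesis by (intro bexI[of _ m]) auto
  qed
qed (auto)

lemma step1:
  assumes k: "k \<ge> (1::nat)"
  shows "Ppos {k} = {x. k \<le> x mod (2*k)}"
proof (rule Ppos_char)
  fix x
  show "x \<in> {x. k \<le> x mod (2*k)} \<longleftrightarrow> (0\<notin>{k} \<and> (\<exists>m\<in>{k}. m \<le> x) \<and> (\<forall>m. m\<in>{k} \<and> 0<m \<and> m\<le>x \<longrightarrow> x - m \<notin> {x. k \<le> x mod (2*k)}))"
  proof (cases "x < k")
    case True then show ?thesis using k by auto
  next
    case False
    have n: "0 < 2*k" using k by simp
    obtain rx rm rt where D: "x mod (2*k) = rx" "k mod (2*k) = rm" "(x-k) mod (2*k) = rt" "rx<2*k" "rm<2*k" "rt<2*k"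
      "rx = rt+rm \<or> rx+2*k = rt+rm" "rx \<le> x" "rm \<le> k" "rt \<le> x-k"
      "x<2*k \<longrightarrow> rx=x" "k<2*k \<longrightarrow> rm=k" "x-k<2*k \<longrightarrow> rt = x-k"
      using DEC[of k x "2*k"] False n by auto
    have "k \<le> rx \<longleftrightarrow> \<not> k \<le> rt" using D k by linarith
    then show ?thesis using False k D by auto
  qed
qed

lemma step2:
  assumes k: "k \<ge> (2::nat)"
  shows "Ppos {x. k \<le> x mod (2*k)} = {x. (k \<le> x \<and> x < 2*k) \<or> x mod (2*k) + 1 = 2*k}"
    (is "Ppos ?M = ?S")
proof (rule Ppos_char3)
  have n: "0 < 2*k" using k by simp
  show "0 \<notin> ?M" using k by simp
  have Mk: "m \<ge> k" if "m \<in> ?M" for m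
  proof -
    have a: "m mod (2*k) \<le> m" by simp
    have b: "k \<le> m mod (2*k)" using that by simp
    from a b show ?thesis by linarith
  qed
  show "\<exists>m\<in>?M. m \<le> x" if "x \<in> ?S" for x
  proof -
    have "k \<in> ?M" using k by simp
    moreover have "x mod (2*k) \<le> x" by simp
    moreover have "(k \<le> x \<and> x < 2*k) \<or> x mod (2*k) + 1 = 2*k" using that by blast
    ultimately show ?thesis using k by (intro bexI[of _ k]) (linarith+)
  qed
  show False if x: "x \<in> ?S" and m: "m \<in> ?M" "0 < m" "x = t + m" and t: "t \<in> ?S" for x m t
  proof -
    obtain rx rm rt where D: "x mod (2*k) = rx" "m mod (2*k) = rm" "t mod (2*k) = rt" "rx<2*k" "rm<2*k" "rt<2*k"
      "rx = rt+rm \<or> rx+2*k = rt+rm" "rx \<le> x" "rm \<le> m" "rt \<le> t"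
      "x<2*k \<longrightarrow> rx=x" "m<2*k \<longrightarrow> rm=m" "t<2*k \<longrightarrow> rt = t"
      using DEC2[OF m(3) n] by blast
    have xS: "(k \<le> x \<and> x < 2*k) \<or> rx + 1 = 2*k" using x D(1) by simp
    have tS: "(k \<le> t \<and> t < 2*k) \<or> rt + 1 = 2*k" using t D(3) by simp
    have mM: "k \<le> rm" using m(1) D(2) by simp
    show False using xS tS mM D(4-) m(3) k by linarith
  qed
  show "\<exists>m t. m\<in>?M \<and> 0<m \<and> x = t + m \<and> t\<in>?S" if nx: "x \<notin> ?S" and ex: "\<exists>m\<in>?M. m\<le>x" for x
  proof -
    have kx: "k \<le> x" using ex Mk by force
    then have x2: "2*k \<le> x" using nx by auto
    have rx1: "x mod (2*k) + 1 \<noteq> 2*k" using nx by auto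
    show ?thesis
    proof (cases "x mod (2*k) < k")
      case True
      obtain m where xm: "x = k + m" using kx le_Suc_ex by blast
      obtain rx rm rt where D: "x mod (2*k) = rx" "m mod (2*k) = rm" "k mod (2*k) = rt" "rx<2*k" "rm<2*k" "rt<2*k"
        "rx = rt+rm \<or> rx+2*k = rt+rm" "rx \<le> x" "rm \<le> m" "rt \<le> k"
        "x<2*k \<longrightarrow> rx=x" "m<2*k \<longrightarrow> rm=m" "k<2*k \<longrightarrow> rt = k"
        using DEC2[OF xm n] by blast
      have "k \<le> rm" using D True k by linarith
      then have "m \<in> ?M" using D(2) by simp
      moreover have "k \<in> ?S" using k by simp
      moreover have "0 < m" using xm x2 k by linarith
      ultimately show ?thesis using xm by blast
    next
      case False
      define t where "t = 2*k-1"
      have tt: "t + 1 = 2*k" using k unfolding t_def by simp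
      define m where "m = x - t"
      have xm: "x = t + m" using x2 tt unfolding m_def by simp
      obtain rx rm rt where D: "x mod (2*k) = rx" "m mod (2*k) = rm" "t mod (2*k) = rt" "rx<2*k" "rm<2*k" "rt<2*k"
        "rx = rt+rm \<or> rx+2*k = rt+rm" "rx \<le> x" "rm \<le> m" "rt \<le> t"
        "x<2*k \<longrightarrow> rx=x" "m<2*k \<longrightarrow> rm=m" "t<2*k \<longrightarrow> rt = t"
        using DEC2[OF xm n] by blast
      have "k \<le> rm" using D False k tt rx1 by linarith
      then have "m \<in> ?M" using D(2) by simp
      moreover have "t \<in> ?S" using k tt by simp
      moreover have "0 < m" using xm x2 tt by linarith
      ultimately show ?thesis using xm by blast
    qed
  qed
qed

lemma step3:
  assumes k: "k \<ge> (2::nat)"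
  shows "Ppos {x. (k \<le> x \<and> x < 2*k) \<or> x mod (2*k) + 1 = 2*k}
    = {x. (k \<le> x \<and> x < 2*k) \<or> (4*k \<le> x+1 \<and> x+2 \<le> 5*k) \<or> (5*k \<le> x+2 \<and> x mod (2*k) + 2 = k)}"
    (is "Ppos ?M = ?S")
proof (rule Ppos_char3)
  have n: "0 < 2*k" using k by simp
  show "0 \<notin> ?M" using k by simp
  have Mk: "m \<ge> k" if "m \<in> ?M" for m
  proof -
    have a: "m mod (2*k) \<le> m" by simp
    have b: "(k \<le> m \<and> m < 2*k) \<or> m mod (2*k) + 1 = 2*k" using that by simp
    from a b k show ?thesis by linarith
  qed
  have Sk: "x \<ge> k" if "x \<in> ?S" for x
  proof -
    have b: "(k \<le> x \<and> x < 2*k) \<or> (4*k \<le> x+1 \<and> x+2 \<le> 5*k) \<or> (5*k \<le> x+2 \<and> x mod (2*k) + 2 = k)" using that by simp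
    from b k show ?thesis by linarith
  qed
  have kM: "k \<in> ?M" using k by simp
  show "\<exists>m\<in>?M. m \<le> x" if "x \<in> ?S" for x
    using kM Sk[OF that] by blast
  show False if x: "x \<in> ?S" and m: "m \<in> ?M" "0 < m" "x = t + m" and t: "t \<in> ?S" for x m t
  proof -
    obtain rx rm rt where D: "x mod (2*k) = rx" "m mod (2*k) = rm" "t mod (2*k) = rt" "rx<2*k" "rm<2*k" "rt<2*k"
      "rx = rt+rm \<or> rx+2*k = rt+rm" "rx \<le> x" "rm \<le> m" "rt \<le> t"
      "x<2*k \<longrightarrow> rx=x" "m<2*k \<longrightarrow> rm=m" "t<2*k \<longrightarrow> rt = t"
      using DEC2[OF m(3) n] by blast
    have xS: "(k \<le> x \<and> x < 2*k) \<or> (4*k \<le> x+1 \<and> x+2 \<le> 5*k) \<or> (5*k \<le> x+2 \<and> rx + 2 = k)" using x D(1) by simp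
    have tS: "(k \<le> t \<and> t < 2*k) \<or> (4*k \<le> t+1 \<and> t+2 \<le> 5*k) \<or> (5*k \<le> t+2 \<and> rt + 2 = k)" using t D(3) by simp
    have mM: "(k \<le> m \<and> m < 2*k) \<or> rm + 1 = 2*k" using m(1) D(2) by simp
    have m1: "1*(2*k) \<le> m \<and> m < 1*(2*k) + 2*k \<longrightarrow> rm + 1*(2*k) = m" using MJ2[of 1 "2*k" m] D(2) by simp
    have x2: "2*(2*k) \<le> x \<and> x < 2*(2*k) + 2*k \<longrightarrow> rx + 2*(2*k) = x" using MJ2[of 2 "2*k" x] D(1) by simp
    have x3: "3*(2*k) \<le> x \<and> x < 3*(2*k) + 2*k \<longrightarrow> rx + 3*(2*k) = x" using MJ2[of 3 "2*k" x] D(1) by simp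
    have t1: "1*(2*k) \<le> t \<and> t < 1*(2*k) + 2*k \<longrightarrow> rt + 1*(2*k) = t" using MJ2[of 1 "2*k" t] D(3) by simp
    have t2: "2*(2*k) \<le> t \<and> t < 2*(2*k) + 2*k \<longrightarrow> rt + 2*(2*k) = t" using MJ2[of 2 "2*k" t] D(3) by simp
    have mk: "m \<ge> k" using Mk m(1) by blast
    have tk: "t \<ge> k" using Sk t by blast
    show False
    proof (cases "x + 2 \<le> 5*k")
      case True
      then have xb: "4*k \<le> x + 1" using xS mk tk m(3) by linarith
      have "t < 2*k" using tS True mk m(3) by linarith
      then show False using mM m1 D(9) mk True xb k tk m(3) by linarith
    next
      case False
      then have xr: "rx + 2 = k" using xS by linarith
      have x7: "7*k \<le> x + 2" using x2 x3 xr False k by linarith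
      show False
      proof (cases "m < 2*k")
        case True
        then have "rm = m" using D(12) by linarith
        moreover have "rt + 2 = k" using tS x7 True k m(3) by linarith
        ultimately show False using D(7) xr mk k True by linarith
      next
        case False
        then have "rm + 1 = 2*k" using mM by linarith
        then have "rt + 1 = k" using D(7) xr k D(6) by linarith
        then show False using tS t1 t2 D(13) k by linarith
      qed
    qed
  qed
  show "\<exists>m t. m\<in>?M \<and> 0<m \<and> x = t + m \<and> t\<in>?S" if nx: "x \<notin> ?S" and ex: "\<exists>m\<in>?M. m\<le>x" for x
  proof -
    have kx: "k \<le> x" using ex Mk by force
    then have x2: "2*k \<le> x" using nx by auto
    show ?thesis
    proof (cases "x < 3*k")
      case True
      define m where "m = k"
      define t where "t = x - k"
      have xm: "x = t + m" using kx unfolding m_def t_def by simp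
      have "t \<in> ?S" using True x2 unfolding t_def by auto
      moreover have "0 < m" using k m_def by simp
      ultimately show ?thesis using xm kM m_def by blast
    next
      case c1: False
      show ?thesis
      proof (cases "x + 1 < 4*k")
        case True
        define t where "t = 2*k-1"
        have tt: "t + 1 = 2*k" using k unfolding t_def by simp
        define m where "m = x - t"
        have xm: "x = t + m" using x2 tt unfolding m_def by simp
        have "m \<in> ?M" using xm tt c1 True by simp
        moreover have "t \<in> ?S" using tt k by simp
        moreover have "0 < m" using xm x2 tt by linarith
        ultimately show ?thesis using xm by blast
      next
        case c2: False
        have x5: "5*k \<le> x + 1" using nx c2 by auto
        have rx2: "x mod (2*k) + 2 \<noteq> k" using nx x5 by auto
        obtain rx where rx: "x mod (2*k) = rx" by blast
        have rxl: "rx < 2*k" using rx n by auto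
        have rxx: "rx \<le> x" using rx by auto
        show ?thesis
        proof (cases "rx + 3 \<le> k \<or> 2*k \<le> rx + 2")
          case True
          define m where "m = (if rx + 3 \<le> k then rx + k + 2 else rx + 2 - k)"
          have m2: "m < 2*k" "k \<le> m" using True k rxl unfolding m_def by auto
          define t where "t = x - m"
          have xm: "x = t + m" using x2 m2 unfolding t_def by simp
          obtain rx' rm rt where D: "x mod (2*k) = rx'" "m mod (2*k) = rm" "t mod (2*k) = rt" "rx'<2*k" "rm<2*k" "rt<2*k"
            "rx' = rt+rm \<or> rx'+2*k = rt+rm" "rx' \<le> x" "rm \<le> m" "rt \<le> t"
            "x<2*k \<longrightarrow> rx'=x" "m<2*k \<longrightarrow> rm=m" "t<2*k \<longrightarrow> rt = t"
            using DEC2[OF xm n] by blast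
          have rr: "rx' = rx" using D(1) rx by simp
          have rm: "rm = m" using D(12) m2 by simp
          have rt: "rt + 2 = k" using D(7) rr rm True m_def k rxl D(6) by (auto split: if_splits)
          have t1: "1*(2*k) \<le> t \<and> t < 1*(2*k) + 2*k \<longrightarrow> rt + 1*(2*k) = t" using MJ2[of 1 "2*k" t] D(3) by simp
          have t2: "2*(2*k) \<le> t \<and> t < 2*(2*k) + 2*k \<longrightarrow> rt + 2*(2*k) = t" using MJ2[of 2 "2*k" t] D(3) by simp
          have t3: "3*k \<le> t" using xm x5 m2 by linarith
          have "5*k \<le> t + 2" using t1 t2 t3 rt k by linarith
          then have "t \<in> ?S" using rt D(3) by simp
          moreover have "m \<in> ?M" using m2 by simp
          moreover have "0 < m" using m2 k by simp
          ultimately show ?thesis using xm by blast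
        next
          case False
          define t where "t = rx + 1"
          define m where "m = x - t"
          have xm: "x = t + m" using x5 rxl unfolding m_def t_def by simp
          obtain rx' rm rt where D: "x mod (2*k) = rx'" "m mod (2*k) = rm" "t mod (2*k) = rt" "rx'<2*k" "rm<2*k" "rt<2*k"
            "rx' = rt+rm \<or> rx'+2*k = rt+rm" "rx' \<le> x" "rm \<le> m" "rt \<le> t"
            "x<2*k \<longrightarrow> rx'=x" "m<2*k \<longrightarrow> rm=m" "t<2*k \<longrightarrow> rt = t"
            using DEC2[OF xm n] by blast
          have rr: "rx' = rx" using D(1) rx by simp
          have tb: "k \<le> t" "t < 2*k" using False rx2 rx unfolding t_def by auto
          have "rt = t" using D(13) tb by simp
          then have "rm + 1 = 2*k" using D(7) rr t_def D(5) by linarith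
          then have "m \<in> ?M" using D(2) by simp
          moreover have "t \<in> ?S" using tb by simp
          moreover have "0 < m" using xm x5 tb k by linarith
          ultimately show ?thesis using xm by blast
        qed
      qed
    qed
  qed
qed

lemma step4:
  assumes k: "k \<ge> (2::nat)"
  shows "Ppos {x. (k \<le> x \<and> x < 2*k) \<or> (4*k \<le> x+1 \<and> x+2 \<le> 5*k) \<or> (5*k \<le> x+2 \<and> x mod (2*k) + 2 = k)}
    = {x. (k \<le> x \<and> x < 2*k) \<or> (4*k \<le> x+1 \<and> x+2 \<le> 5*k) \<or> (7*k \<le> x+2 \<and> x+3 \<le> 8*k) \<or> x + 3 = 10*k}"
    (is "Ppos ?M = ?S")
proof (rule Ppos_char3)
  have n: "0 < 2*k" using k by simp
  show "0 \<notin> ?M" using k by simp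
  have Mk: "m \<ge> k" if "m \<in> ?M" for m
  proof -
    have b: "(k \<le> m \<and> m < 2*k) \<or> (4*k \<le> m+1 \<and> m+2 \<le> 5*k) \<or> (5*k \<le> m+2 \<and> m mod (2*k) + 2 = k)" using that by simp
    from b k show ?thesis by linarith
  qed
  have Sk: "x \<ge> k" if "x \<in> ?S" for x
  proof -
    have b: "(k \<le> x \<and> x < 2*k) \<or> (4*k \<le> x+1 \<and> x+2 \<le> 5*k) \<or> (7*k \<le> x+2 \<and> x+3 \<le> 8*k) \<or> x + 3 = 10*k" using that by simp
    from b k show ?thesis by linarith
  qed
  have kM: "k \<in> ?M" using k by simp
  show "\<exists>m\<in>?M. m \<le> x" if "x \<in> ?S" for x
    using kM Sk[OF that] by blast
  show False if x: "x \<in> ?S" and m: "m \<in> ?M" "0 < m" "x = t + m" and t: "t \<in> ?S" for x m t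
  proof -
    obtain rx rm rt where D: "x mod (2*k) = rx" "m mod (2*k) = rm" "t mod (2*k) = rt" "rx<2*k" "rm<2*k" "rt<2*k"
      "rx = rt+rm \<or> rx+2*k = rt+rm" "rx \<le> x" "rm \<le> m" "rt \<le> t"
      "x<2*k \<longrightarrow> rx=x" "m<2*k \<longrightarrow> rm=m" "t<2*k \<longrightarrow> rt = t"
      using DEC2[OF m(3) n] by blast
    have xS: "(k \<le> x \<and> x < 2*k) \<or> (4*k \<le> x+1 \<and> x+2 \<le> 5*k) \<or> (7*k \<le> x+2 \<and> x+3 \<le> 8*k) \<or> x + 3 = 10*k" using x by simp
    have tS: "(k \<le> t \<and> t < 2*k) \<or> (4*k \<le> t+1 \<and> t+2 \<le> 5*k) \<or> (7*k \<le> t+2 \<and> t+3 \<le> 8*k) \<or> t + 3 = 10*k" using t by simp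
    have mM: "(k \<le> m \<and> m < 2*k) \<or> (4*k \<le> m+1 \<and> m+2 \<le> 5*k) \<or> (5*k \<le> m+2 \<and> rm + 2 = k)" using m(1) D(2) by simp
    have m2: "2*(2*k) \<le> m \<and> m < 2*(2*k) + 2*k \<longrightarrow> rm + 2*(2*k) = m" using MJ2[of 2 "2*k" m] D(2) by simp
    have m3: "3*(2*k) \<le> m \<and> m < 3*(2*k) + 2*k \<longrightarrow> rm + 3*(2*k) = m" using MJ2[of 3 "2*k" m] D(2) by simp
    have m4: "4*(2*k) \<le> m \<and> m < 4*(2*k) + 2*k \<longrightarrow> rm + 4*(2*k) = m" using MJ2[of 4 "2*k" m] D(2) by simp
    have xb: "x + 3 \<le> 10*k" using xS k by linarith
    have mP: "(k \<le> m \<and> m < 2*k) \<or> (4*k \<le> m+1 \<and> m+2 \<le> 5*k) \<or> m + 2 = 7*k \<or> m + 2 = 9*k"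
      using mM m2 m3 m4 xb m(3) k by linarith
    show False using xS tS mP m(3) k by linarith
  qed
  show "\<exists>m t. m\<in>?M \<and> 0<m \<and> x = t + m \<and> t\<in>?S" if nx: "x \<notin> ?S" and ex: "\<exists>m\<in>?M. m\<le>x" for x
  proof -
    have kx: "k \<le> x" using ex Mk by force
    have nx': "\<not> ((k \<le> x \<and> x < 2*k) \<or> (4*k \<le> x+1 \<and> x+2 \<le> 5*k) \<or> (7*k \<le> x+2 \<and> x+3 \<le> 8*k) \<or> x + 3 = 10*k)" using nx by simp
    have gen: "\<exists>m t. m\<in>?M \<and> 0<m \<and> x = t + m \<and> t\<in>?S" if tS: "t \<in> ?S" and tx: "t \<le> x"
       and mM: "x - t \<in> ?M" for t
      using tS tx mM Mk[OF mM] k by (intro exI[of _ "x-t"] exI[of _ t]) auto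
    have genI: "\<exists>m t. m\<in>?M \<and> 0<m \<and> x = t + m \<and> t\<in>?S" if tS: "t \<in> ?S" and tx: "x = t + m"
       and mM: "(k \<le> m \<and> m < 2*k) \<or> (4*k \<le> m+1 \<and> m+2 \<le> 5*k)" for t m
      using tS tx mM k by (intro exI[of _ m] exI[of _ t]) auto
    show ?thesis
    proof (cases "x + 3 < 12*k")
      case True
      consider "x < 3*k" | "3*k \<le> x \<and> x + 1 < 4*k" | "5*k \<le> x + 1 \<and> x + 1 < 6*k"
        | "6*k \<le> x + 1 \<and> x + 2 < 7*k" | "8*k \<le> x + 2 \<and> x + 2 < 9*k" | "9*k \<le> x + 2 \<and> x + 3 < 10*k"
        | "10*k \<le> x + 2 \<and> x + 3 < 11*k" | "11*k \<le> x + 3 \<and> x + 3 < 12*k"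
        using nx' True kx by linarith
      then show ?thesis
      proof cases
        case 1
        show ?thesis by (rule genI[of "x-k" k]) (use 1 nx' kx k in \<open>simp; linarith\<close>)+
      next
        case 2
        show ?thesis by (rule genI[of "2*k-1" "x-(2*k-1)"]) (use 2 k in \<open>simp; linarith\<close>)+
      next
        case 3
        show ?thesis by (rule genI[of "x-(4*k-1)" "4*k-1"]) (use 3 k in \<open>simp; linarith\<close>)+
      next
        case 4
        show ?thesis by (rule genI[of "2*k-1" "x-(2*k-1)"]) (use 4 k in \<open>simp; linarith\<close>)+
      next
        case 5
        show ?thesis by (rule genI[of "x-k" k]) (use 5 k in \<open>simp; linarith\<close>)+
      next
        case 6
        show ?thesis by (rule genI[of "8*k-3" "x-(8*k-3)"]) (use 6 k in \<open>simp; linarith\<close>)+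
      next
        case 7
        define m9 where "m9 = 9*k-2"
        have m9: "m9 + 2 = 9*k" using k unfolding m9_def by simp
        have "4*(2*k) \<le> m9 \<and> m9 < 4*(2*k) + 2*k" using m9 k by linarith
        then have r9: "m9 mod (2*k) + 4*(2*k) = m9" using MJ2 by blast
        have "5*k \<le> m9 + 2 \<and> m9 mod (2*k) + 2 = k" using r9 m9 by linarith
        then have "m9 \<in> ?M" by simp
        moreover have "x - m9 \<in> ?S" using 7 m9 by (simp; linarith)
        moreover have "0 < m9" "x = (x - m9) + m9" using 7 m9 k by auto
        ultimately show ?thesis by blast
      next
        case 8
        show ?thesis by (rule genI[of "10*k-3" "x-(10*k-3)"]) (use 8 k in \<open>simp; linarith\<close>)+
      qed
    next
      case False
      obtain rx where rx: "x mod (2*k) = rx" by blast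
      have rxl: "rx < 2*k" using rx n by auto
      consider (a) "rx + 3 \<le> k" | (b) "k \<le> rx + 2 \<and> rx + 4 \<le> 2*k" | (c) "rx + 3 = 2*k" | (d) "2*k \<le> rx + 2"
        by linarith
      then show ?thesis
      proof cases
        case a
        define t where "t = rx + k + 2"
        define m where "m = x - t"
        have xm: "x = t + m" using False a unfolding m_def t_def by simp
        obtain rx' rm rt where D: "x mod (2*k) = rx'" "m mod (2*k) = rm" "t mod (2*k) = rt" "rx'<2*k" "rm<2*k" "rt<2*k"
          "rx' = rt+rm \<or> rx'+2*k = rt+rm" "rx' \<le> x" "rm \<le> m" "rt \<le> t"
          "x<2*k \<longrightarrow> rx'=x" "m<2*k \<longrightarrow> rm=m" "t<2*k \<longrightarrow> rt = t"
          using DEC2[OF xm n] by blast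
        have "rt = t" using D(13) a unfolding t_def by simp
        then have "rm + 2 = k" using D(7) D(1) rx t_def D(5) a by linarith
        moreover have "5*k \<le> m + 2" using xm False a t_def by linarith
        ultimately have "m \<in> ?M" using D(2) by simp
        moreover have "t \<in> ?S" using a unfolding t_def by simp
        moreover have "0 < m" using xm False a t_def by linarith
        ultimately show ?thesis using xm by blast
      next
        case b
        define t where "t = rx + 3*k + 2"
        define m where "m = x - t"
        have tb: "4*k \<le> t" "t + 2 \<le> 5*k" using b unfolding t_def by auto
        have xm: "x = t + m" using False tb unfolding m_def by simp
        obtain rx' rm rt where D: "x mod (2*k) = rx'" "m mod (2*k) = rm" "t mod (2*k) = rt" "rx'<2*k" "rm<2*k" "rt<2*k"
          "rx' = rt+rm \<or> rx'+2*k = rt+rm" "rx' \<le> x" "rm \<le> m" "rt \<le> t"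
          "x<2*k \<longrightarrow> rx'=x" "m<2*k \<longrightarrow> rm=m" "t<2*k \<longrightarrow> rt = t"
          using DEC2[OF xm n] by blast
        have "rt + 2*(2*k) = t" using MJ2[of 2 "2*k" t] D(3) tb k by simp
        then have "rm + 2 = k" using D(7) D(1) rx t_def D(5) b by linarith
        moreover have "5*k \<le> m + 2" using xm False tb by linarith
        ultimately have "m \<in> ?M" using D(2) by simp
        moreover have "t \<in> ?S" using tb by simp
        moreover have "0 < m" using xm False tb by linarith
        ultimately show ?thesis using xm by blast
      next
        case c
        define t where "t = 7*k - 1"
        define m where "m = x - t"
        have tb: "7*k \<le> t + 2" "t + 3 \<le> 8*k" "t + 1 = 7*k" using k unfolding t_def by auto
        have xm: "x = t + m" using False tb unfolding m_def by simp
        obtain rx' rm rt where D: "x mod (2*k) = rx'" "m mod (2*k) = rm" "t mod (2*k) = rt" "rx'<2*k" "rm<2*k" "rt<2*k"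
          "rx' = rt+rm \<or> rx'+2*k = rt+rm" "rx' \<le> x" "rm \<le> m" "rt \<le> t"
          "x<2*k \<longrightarrow> rx'=x" "m<2*k \<longrightarrow> rm=m" "t<2*k \<longrightarrow> rt = t"
          using DEC2[OF xm n] by blast
        have "rt + 3*(2*k) = t" using MJ2[of 3 "2*k" t] D(3) tb k by simp
        then have "rm + 2 = k" using D(7) D(1) rx tb D(5) c by linarith
        moreover have "5*k \<le> m + 2" using xm False tb by linarith
        ultimately have "m \<in> ?M" using D(2) by simp
        moreover have "t \<in> ?S" using tb by simp
        moreover have "0 < m" using xm False tb by linarith
        ultimately show ?thesis using xm by blast
      next
        case d
        define t where "t = rx + 2 - k"
        define m where "m = x - t"
        have tb: "k \<le> t" "t < 2*k" "t + k = rx + 2" using d rxl k unfolding t_def by auto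
        have xm: "x = t + m" using False tb unfolding m_def by simp
        obtain rx' rm rt where D: "x mod (2*k) = rx'" "m mod (2*k) = rm" "t mod (2*k) = rt" "rx'<2*k" "rm<2*k" "rt<2*k"
          "rx' = rt+rm \<or> rx'+2*k = rt+rm" "rx' \<le> x" "rm \<le> m" "rt \<le> t"
          "x<2*k \<longrightarrow> rx'=x" "m<2*k \<longrightarrow> rm=m" "t<2*k \<longrightarrow> rt = t"
          using DEC2[OF xm n] by blast
        have "rt = t" using D(13) tb by simp
        then have "rm + 2 = k" using D(7) D(1) rx tb D(5) rxl k by linarith
        moreover have "5*k \<le> m + 2" using xm False tb by linarith
        ultimately have "m \<in> ?M" using D(2) by simp
        moreover have "t \<in> ?S" using tb by simp
        moreover have "0 < m" using xm False tb by linarith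
        ultimately show ?thesis using xm by blast
      qed
    qed
  qed
qed

lemma stepB56:
  assumes k: "k \<ge> (1::nat)" and nk: "n + 1 = 3*k"
  and x: "k \<le> x mod n \<and> x mod n < 2*k" and t: "k \<le> t mod n \<and> t mod n < 2*k"
  and m: "k \<le> m mod n \<and> m mod n < 2*k" and xm: "x = t + m"
  shows False
proof -
  have n: "0 < n" using k nk by linarith
  obtain rx rm rt where D: "x mod n = rx" "m mod n = rm" "t mod n = rt" "rx<n" "rm<n" "rt<n"
    "rx = rt+rm \<or> rx+n = rt+rm" "rx \<le> x" "rm \<le> m" "rt \<le> t"
    "x<n \<longrightarrow> rx=x" "m<n \<longrightarrow> rm=m" "t<n \<longrightarrow> rt = t"
    using DEC2[OF xm n] by blast
  show False using D(7) x t m D(1-3) nk by linarith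
qed

lemma stepC56:
  assumes k: "k \<ge> (1::nat)" and nk: "n + 1 = 3*k"
  and nx: "\<not> (k \<le> x mod n \<and> x mod n < 2*k)" and kx: "k \<le> x"
  shows "\<exists>m t. k \<le> m \<and> m < 2*k \<and> x = t + m \<and> k \<le> t mod n \<and> t mod n < 2*k"
proof -
  have n: "0 < n" using k nk by linarith
  obtain rx where rx: "x mod n = rx" by blast
  have rxl: "rx < n" "rx \<le> x" using rx n by auto
  have xn: "x < n \<longrightarrow> rx = x" using rx by auto
  show ?thesis
  proof (cases "rx < k")
    case True
    define m where "m = rx + k"
    define t where "t = x - m"
    have xm: "x = t + m" unfolding t_def m_def using True xn kx nk by linarith
    obtain rx' rm rt where D: "x mod n = rx'" "m mod n = rm" "t mod n = rt" "rx'<n" "rm<n" "rt<n"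
      "rx' = rt+rm \<or> rx'+n = rt+rm" "rx' \<le> x" "rm \<le> m" "rt \<le> t"
      "x<n \<longrightarrow> rx'=x" "m<n \<longrightarrow> rm=m" "t<n \<longrightarrow> rt = t"
      using DEC2[OF xm n] by blast
    have "rt + 1 = 2*k" using D(7) D(1) rx D(12) m_def True nk D(6) k by linarith
    then show ?thesis using xm D(3) m_def True by (intro exI[of _ m] exI[of _ t]) auto
  next
    case False
    then have r2: "2*k \<le> rx" using nx rx by auto
    define m where "m = rx - k"
    define t where "t = x - m"
    have xm: "x = t + m" unfolding t_def m_def using rxl by linarith
    obtain rx' rm rt where D: "x mod n = rx'" "m mod n = rm" "t mod n = rt" "rx'<n" "rm<n" "rt<n"
      "rx' = rt+rm \<or> rx'+n = rt+rm" "rx' \<le> x" "rm \<le> m" "rt \<le> t"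
      "x<n \<longrightarrow> rx'=x" "m<n \<longrightarrow> rm=m" "t<n \<longrightarrow> rt = t"
      using DEC2[OF xm n] by blast
    have "rt = k" using D(7) D(1) rx D(12) m_def r2 rxl nk D(6) by linarith
    then show ?thesis using xm D(3) m_def r2 rxl nk k by (intro exI[of _ m] exI[of _ t]) auto
  qed
qed

lemma step5:
  assumes k: "k \<ge> (2::nat)" and nk: "n + 1 = 3*k"
  shows "Ppos {x. (k \<le> x \<and> x < 2*k) \<or> (4*k \<le> x+1 \<and> x+2 \<le> 5*k) \<or> (7*k \<le> x+2 \<and> x+3 \<le> 8*k) \<or> x + 3 = 10*k}
    = {x. k \<le> x mod n \<and> x mod n < 2*k}"
    (is "Ppos ?M = ?S")
proof (rule Ppos_char3)
  have n: "0 < n" using k nk by linarith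
  show "0 \<notin> ?M" using k by simp
  have Mk: "m \<ge> k" if "m \<in> ?M" for m
  proof -
    have b: "(k \<le> m \<and> m < 2*k) \<or> (4*k \<le> m+1 \<and> m+2 \<le> 5*k) \<or> (7*k \<le> m+2 \<and> m+3 \<le> 8*k) \<or> m + 3 = 10*k" using that by simp
    from b k show ?thesis by linarith
  qed
  have Mr: "k \<le> m mod n \<and> m mod n < 2*k" if "m \<in> ?M" for m
  proof -
    have b: "(k \<le> m \<and> m < 2*k) \<or> (4*k \<le> m+1 \<and> m+2 \<le> 5*k) \<or> (7*k \<le> m+2 \<and> m+3 \<le> 8*k) \<or> m + 3 = 10*k" using that by simp
    have m0: "m < n \<longrightarrow> m mod n = m" by simp
    have m1: "1*n \<le> m \<and> m < 1*n + n \<longrightarrow> m mod n + 1*n = m" using MJ2 by blast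
    have m2: "2*n \<le> m \<and> m < 2*n + n \<longrightarrow> m mod n + 2*n = m" using MJ2 by blast
    have m3: "3*n \<le> m \<and> m < 3*n + n \<longrightarrow> m mod n + 3*n = m" using MJ2 by blast
    show ?thesis using b m0 m1 m2 m3 nk k by linarith
  qed
  have Sk: "x \<ge> k" if "x \<in> ?S" for x
  proof -
    have a: "x mod n \<le> x" by simp
    have b: "k \<le> x mod n" using that by simp
    from a b show ?thesis by linarith
  qed
  have kM: "k \<in> ?M" using k by simp
  show "\<exists>m\<in>?M. m \<le> x" if "x \<in> ?S" for x
    using kM Sk[OF that] by blast
  show False if x: "x \<in> ?S" and m: "m \<in> ?M" "0 < m" "x = t + m" and t: "t \<in> ?S" for x m t
    using stepB56[of k n x t m] x t Mr[OF m(1)] m(3) k nk by simp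
  show "\<exists>m t. m\<in>?M \<and> 0<m \<and> x = t + m \<and> t\<in>?S" if nx: "x \<notin> ?S" and ex: "\<exists>m\<in>?M. m\<le>x" for x
  proof -
    have kx: "k \<le> x" using ex Mk by force
    obtain m t where "k \<le> m" "m < 2*k" "x = t + m" "k \<le> t mod n \<and> t mod n < 2*k"
      using stepC56[of k n x] k nk nx kx by auto
    then show ?thesis using k by (intro exI[of _ m] exI[of _ t]) auto
  qed
qed

lemma step6:
  assumes k: "k \<ge> (1::nat)" and nk: "n + 1 = 3*k"
  shows "Ppos {x. k \<le> x mod n \<and> x mod n < 2*k} = {x. k \<le> x mod n \<and> x mod n < 2*k}"
    (is "Ppos ?M = ?S")
proof (rule Ppos_char3)
  have n: "0 < n" using k nk by linarith
  show "0 \<notin> ?M" using k by simp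
  have Sk: "x \<ge> k" if "x \<in> ?S" for x
  proof -
    have a: "x mod n \<le> x" by simp
    have b: "k \<le> x mod n" using that by simp
    from a b show ?thesis by linarith
  qed
  show "\<exists>m\<in>?M. m \<le> x" if "x \<in> ?S" for x
    using that by blast
  show False if x: "x \<in> ?S" and m: "m \<in> ?M" "0 < m" "x = t + m" and t: "t \<in> ?S" for x m t
    using stepB56[of k n x t m] x t m k nk by simp
  show "\<exists>m t. m\<in>?M \<and> 0<m \<and> x = t + m \<and> t\<in>?S" if nx: "x \<notin> ?S" and ex: "\<exists>m\<in>?M. m\<le>x" for x
  proof -
    have kx: "k \<le> x" using ex Sk by force
    obtain m t where mt: "k \<le> m" "m < 2*k" "x = t + m" "k \<le> t mod n \<and> t mod n < 2*k"
      using stepC56[of k n x] k nk nx kx by auto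
    have "m mod n = m" using mt nk by simp
    then show ?thesis using mt k by (intro exI[of _ m] exI[of _ t]) auto
  qed
qed

lemma Mk_char:
  assumes k: "k \<ge> (1::nat)" and nk: "n + 1 = 3*k"
  shows "Mk k = {x. k \<le> x mod n \<and> x mod n < 2*k}"
proof -
  have e: "3*k - 1 = n" "2*k-1 < 2*k" using nk k by auto
  have "x \<in> Mk k \<longleftrightarrow> k \<le> x mod n \<and> x mod n < 2*k" for x
  proof
    assume "x \<in> Mk k"
    then obtain i j where ij: "x = i*n + j" "k \<le> j" "j \<le> 2*k-1" using k e unfolding Mk_def by auto
    have "j < n" using ij nk k by linarith
    then have "x mod n = j" using ij by simp
    then show "k \<le> x mod n \<and> x mod n < 2*k" using ij k by linarith
  next
    assume a: "k \<le> x mod n \<and> x mod n < 2*k"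
    have "\<exists>i j. x = i * n + j \<and> k \<le> j \<and> j \<le> 2*k-1" using a
      by (intro exI[of _ "x div n"] exI[of _ "x mod n"]) (simp; linarith)
    then show "x \<in> Mk k" unfolding Mk_def using k e(1) by auto
  qed
  then show ?thesis by auto
qed

lemma Miter_0: "Miter M 0 = M" unfolding Miter_def by simp
lemma Miter_Suc: "Miter M (Suc i) = Ppos (Miter M i)" unfolding Miter_def by simp

lemma stable:
  assumes "Ppos S = S" "Miter M N = S" "N \<le> i"
  shows "Miter M i = S"
  using assms(3)
proof (induction i rule: dec_induct)
  case base then show ?case using assms(2) .
next
  case (step i) then show ?case using assms(1) Miter_Suc by simp
qed

lemma Minf_eq:
  assumes "\<And>i. N \<le> i \<Longrightarrow> Miter M i = S"
  shows "Minf M = S"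
proof -
  have "x \<in> Minf M \<longleftrightarrow> x \<in> S" for x
  proof
    assume "x \<in> Minf M"
    then obtain i0 where "\<forall>i\<ge>i0. x \<in> Miter M i" unfolding Minf_def by auto
    then have "x \<in> Miter M (max i0 N)" by simp
    then show "x \<in> S" using assms[of "max i0 N"] by simp
  next
    assume "x \<in> S"
    then have "\<forall>i\<ge>N. x \<in> Miter M i" using assms by simp
    then show "x \<in> Minf M" unfolding Minf_def by auto
  qed
  then show ?thesis by auto
qed

lemma neqI: "w \<in> A \<Longrightarrow> w \<notin> B \<Longrightarrow> A \<noteq> B" by auto

lemma phi_eq:
  assumes "Miter M N = Minf M" "\<And>i. i < N \<Longrightarrow> Miter M i \<noteq> Minf M"
  shows "phi M = N"
  unfolding phi_def
proof (rule Least_equality)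
  show "Miter M N = Minf M" by (rule assms(1))
  show "N \<le> y" if "Miter M y = Minf M" for y
    using assms(2)[of y] that by (cases "y < N") auto
qed

lemma case0: "Minf {0} = Mk 0 \<and> (\<exists>i. Miter {0} i = Minf {0}) \<and> phi {0} = 1"
proof -
  have "\<not> isP {0} x" for x by (subst isP.simps) simp
  then have P0: "Ppos {0} = {}" unfolding Ppos_def by auto
  have "\<not> isP {} x" for x by (subst isP.simps) simp
  then have Pe: "Ppos {} = {}" unfolding Ppos_def by auto
  have m1: "Miter {0} 1 = {}" using P0 Miter_Suc[of "{0}" 0] Miter_0 by simp
  have all: "\<And>i. 1 \<le> i \<Longrightarrow> Miter {0} i = {}" using stable[OF Pe m1] by blast
  have inf: "Minf {0} = {}" by (rule Minf_eq[OF all])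
  have "phi {0} = 1"
    by (rule phi_eq) (use m1 inf Miter_0 in auto)
  then show ?thesis using inf m1 unfolding Mk_def by auto
qed

lemma case1: "Minf {1} = Mk 1 \<and> (\<exists>i. Miter {1} i = Minf {1}) \<and> phi {1} = 1"
proof -
  define S where "S = {x::nat. 1 \<le> x mod 2 \<and> x mod 2 < 2*1}"
  have P1: "Ppos {1} = S" using step1[of 1] unfolding S_def by auto
  have PS: "Ppos S = S" unfolding S_def by (rule step6) auto
  have m1: "Miter {1} 1 = S" using P1 Miter_Suc[of "{1}" 0] Miter_0 by simp
  have all: "\<And>i. 1 \<le> i \<Longrightarrow> Miter {1} i = S" using stable[OF PS m1] by blast
  have inf: "Minf {1} = S" by (rule Minf_eq[OF all])
  have mk: "Mk 1 = S" unfolding S_def by (rule Mk_char) auto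
  have "3 \<in> S" "3 \<notin> {1::nat}" unfolding S_def by auto
  then have "Miter {1} 0 \<noteq> Minf {1}" using Miter_0 inf by auto
  then have "phi {1} = 1"
    by (intro phi_eq) (use m1 inf in auto)
  then show ?thesis using inf m1 mk by auto
qed

lemma caseK:
  assumes k: "k \<ge> (2::nat)"
  shows "Minf {k} = Mk k \<and> (\<exists>i. Miter {k} i = Minf {k}) \<and> phi {k} = 5"
proof -
  define n where "n = 3*k - 1"
  have nk: "n + 1 = 3*k" using k unfolding n_def by simp
  define A1 where "A1 = {x. k \<le> x mod (2*k)}"
  define A2 where "A2 = {x. (k \<le> x \<and> x < 2*k) \<or> x mod (2*k) + 1 = 2*k}"
  define A3 where "A3 = {x. (k \<le> x \<and> x < 2*k) \<or> (4*k \<le> x+1 \<and> x+2 \<le> 5*k) \<or> (5*k \<le> x+2 \<and> x mod (2*k) + 2 = k)}"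
  define A4 where "A4 = {x. (k \<le> x \<and> x < 2*k) \<or> (4*k \<le> x+1 \<and> x+2 \<le> 5*k) \<or> (7*k \<le> x+2 \<and> x+3 \<le> 8*k) \<or> x + 3 = 10*k}"
  define A5 where "A5 = {x. k \<le> x mod n \<and> x mod n < 2*k}"
  have i1: "Miter {k} 1 = A1" using step1[of k] k Miter_Suc[of "{k}" 0] Miter_0 unfolding A1_def by simp
  have i2: "Miter {k} 2 = A2" using step2[OF k] i1 Miter_Suc[of "{k}" 1] unfolding A1_def A2_def by (simp add: numeral_2_eq_2)
  have i3: "Miter {k} 3 = A3" using step3[OF k] i2 Miter_Suc[of "{k}" 2] unfolding A2_def A3_def by (simp add: numeral_3_eq_3)
  have i4: "Miter {k} 4 = A4" using step4[OF k] i3 Miter_Suc[of "{k}" 3] unfolding A3_def A4_def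
    by (simp add: eval_nat_numeral)
  have i5: "Miter {k} 5 = A5" using step5[OF k nk] i4 Miter_Suc[of "{k}" 4] unfolding A4_def A5_def
    by (simp add: eval_nat_numeral)
  have PS: "Ppos A5 = A5" unfolding A5_def by (rule step6) (use k nk in auto)
  have all: "\<And>i. 5 \<le> i \<Longrightarrow> Miter {k} i = A5" using stable[OF PS i5] by blast
  have inf: "Minf {k} = A5" by (rule Minf_eq[OF all])
  have mk: "Mk k = A5" unfolding A5_def by (rule Mk_char) (use k nk in auto)
  have w0: "k+1 \<in> A5" "k+1 \<notin> {k}"
  proof -
    have "k + 1 < n" using nk k by linarith
    then have "(k+1) mod n = k+1" by simp
    moreover have "k \<le> k+1 \<and> k+1 < 2*k" using k by linarith
    ultimately show "k+1 \<in> A5" unfolding A5_def by simp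
    show "k+1 \<notin> {k}" by simp
  qed
  have w1: "3*k \<in> A1" "3*k \<notin> A5"
  proof -
    have "1*(2*k) \<le> 3*k \<and> 3*k < 1*(2*k) + 2*k" using k by linarith
    then have a: "(3*k) mod (2*k) + 1*(2*k) = 3*k" using MJ2 by blast
    have "1*n \<le> 3*k \<and> 3*k < 1*n + n" using k nk by linarith
    then have b: "(3*k) mod n + 1*n = 3*k" using MJ2 by blast
    have "k \<le> (3*k) mod (2*k)" using a by linarith
    then show "3*k \<in> A1" unfolding A1_def by simp
    have "\<not> (k \<le> (3*k) mod n \<and> (3*k) mod n < 2*k)" using b k nk by linarith
    then show "3*k \<notin> A5" unfolding A5_def by simp
  qed
  have w2: "4*k \<notin> A2" "4*k \<in> A5"
  proof -
    have "2*(2*k) \<le> 4*k \<and> 4*k < 2*(2*k) + 2*k" using k by linarith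
    then have a: "(4*k) mod (2*k) + 2*(2*k) = 4*k" using MJ2 by blast
    have "1*n \<le> 4*k \<and> 4*k < 1*n + n" using k nk by linarith
    then have b: "(4*k) mod n + 1*n = 4*k" using MJ2 by blast
    have "\<not> ((k \<le> 4*k \<and> 4*k < 2*k) \<or> (4*k) mod (2*k) + 1 = 2*k)" using a k by linarith
    then show "4*k \<notin> A2" unfolding A2_def by simp
    have "k \<le> (4*k) mod n \<and> (4*k) mod n < 2*k" using b k nk by linarith
    then show "4*k \<in> A5" unfolding A5_def by simp
  qed
  have w3: "7*k-1 \<notin> A3" "7*k-1 \<in> A5"
  proof -
    have "3*(2*k) \<le> 7*k-1 \<and> 7*k-1 < 3*(2*k) + 2*k" using k by linarith
    then have a: "(7*k-1) mod (2*k) + 3*(2*k) = 7*k-1" using MJ2 by blast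
    have "2*n \<le> 7*k-1 \<and> 7*k-1 < 2*n + n" using k nk by linarith
    then have b: "(7*k-1) mod n + 2*n = 7*k-1" using MJ2 by blast
    have "\<not> ((k \<le> 7*k-1 \<and> 7*k-1 < 2*k) \<or> (4*k \<le> 7*k-1+1 \<and> 7*k-1+2 \<le> 5*k) \<or> (5*k \<le> 7*k-1+2 \<and> (7*k-1) mod (2*k) + 2 = k))"
      using a k by linarith
    then show "7*k-1 \<notin> A3" unfolding A3_def by simp
    have "k \<le> (7*k-1) mod n \<and> (7*k-1) mod n < 2*k" using b k nk by linarith
    then show "7*k-1 \<in> A5" unfolding A5_def by simp
  qed
  have w4: "10*k-2 \<notin> A4" "10*k-2 \<in> A5"
  proof -
    have "3*n \<le> 10*k-2 \<and> 10*k-2 < 3*n + n" using k nk by linarith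
    then have b: "(10*k-2) mod n + 3*n = 10*k-2" using MJ2 by blast
    have "\<not> ((k \<le> 10*k-2 \<and> 10*k-2 < 2*k) \<or> (4*k \<le> 10*k-2+1 \<and> 10*k-2+2 \<le> 5*k) \<or> (7*k \<le> 10*k-2+2 \<and> 10*k-2+3 \<le> 8*k) \<or> 10*k-2 + 3 = 10*k)"
      using k by linarith
    then show "10*k-2 \<notin> A4" unfolding A4_def by simp
    have "k \<le> (10*k-2) mod n \<and> (10*k-2) mod n < 2*k" using b k nk by linarith
    then show "10*k-2 \<in> A5" unfolding A5_def by simp
  qed
  have d0: "Miter {k} 0 \<noteq> A5" using neqI[OF w0(1,2)] Miter_0 by simp
  have d1: "Miter {k} 1 \<noteq> A5" using neqI[OF w1(1,2)] i1 by simp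
  have d2: "Miter {k} 2 \<noteq> A5" using neqI[OF w2(2,1)] i2 by simp
  have d3: "Miter {k} 3 \<noteq> A5" using neqI[OF w3(2,1)] i3 by simp
  have d4: "Miter {k} 4 \<noteq> A5" using neqI[OF w4(2,1)] i4 by simp
  have lt: "Miter {k} i \<noteq> Minf {k}" if "i < 5" for i
  proof -
    have "i = 0 \<or> i = 1 \<or> i = 2 \<or> i = 3 \<or> i = 4" using that by linarith
    then show ?thesis using d0 d1 d2 d3 d4 inf by (elim disjE) simp_all
  qed
  have "phi {k} = 5" by (rule phi_eq) (use i5 inf lt in auto)
  then show ?thesis using inf i5 mk by auto
qed

theorem corollary10:
  shows "(\<forall>k::nat. Minf {k} = Mk k \<and> (\<exists>i. Miter {k} i = Minf {k}))
     \<and> phi {0} = 1 \<and> phi {1} = 1 \<and> (\<forall>k::nat. k \<ge> 2 \<longrightarrow> phi {k} = 5)"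
proof -
  have "Minf {k} = Mk k \<and> (\<exists>i. Miter {k} i = Minf {k})" for k
  proof -
    consider "k = 0" | "k = 1" | "k \<ge> 2" by linarith
    then show ?thesis using case0 case1 caseK by cases blast+
  qed
  then show ?thesis using case0 case1 caseK by blast
qed

end
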